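(* Let $R$ be a finite group and let $T \leq R$ be a subgroup. Then \[ |\mathrm{Sub}(R,T)| \leq 7.3722 \cdot [R:T]^{\frac{\log_2 [R:T]}{4} + 1.8919}. \]
   Context: For a finite group $R$ and a subgroup $T\le R$, $\mathrm{Sub}(R,T)=\{H\le R : T\le H\}$ denotes the set of subgroups of $R$ containing $T$. *)

theory Defs
  imports "HOL-Algebra.Algebra" "HOL-Analysis.Analysis"
begin

definition Sub :: "('a, 'b) monoid_scheme \<Rightarrow> 'a set \<Rightarrow> 'a set set" where
  "Sub R T = {H. subgroup H R \<and> T \<subseteq> H}"

end

theory Submission
  imports Defs
begin

lemma sub_card_dvd:
  assumes "group R" "subgroup I R" "subgroup J R" "I \<subseteq> J"
  shows "card I dvd card J"
proof -
  interpret group R by fact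
  have "subgroup I (R\<lparr>carrier := J\<rparr>)" using subgroup_incl assms by blast
  moreover have "group (R\<lparr>carrier := J\<rparr>)" using subgroup.subgroup_is_group assms by blast
  ultimately have "card (rcosets\<^bsub>R\<lparr>carrier := J\<rparr>\<^esub> I) * card I = Coset.order (R\<lparr>carrier := J\<rparr>)"
    using group.lagrange by blast
  then show ?thesis unfolding Coset.order_def by (metis dvd_triv_right partial_object.select_convs(1) partial_object.surjective partial_object.update_convs(1))
qed

definition ov :: "('a, 'b) monoid_scheme \<Rightarrow> 'a set \<Rightarrow> nat \<Rightarrow> 'a set set" where
  "ov R K m = {H. subgroup H R \<and> K \<subseteq> H \<and> card H = m}"

definition SS :: "nat \<Rightarrow> nat \<Rightarrow> nat set" where
  "SS c m = {k. 2^k * c \<le> m}"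

lemma SS_finite: assumes "c \<ge> 1" shows "finite (SS c m)"
proof -
  have "SS c m \<subseteq> {..m}"
  proof
    fix k assume "k \<in> SS c m"
    then have "2^k * c \<le> m" by (simp add: SS_def)
    moreover have "k < 2^k" by (rule less_exp)
    ultimately show "k \<in> {..m}" using assms
      by (metis atMost_iff dual_order.trans less_imp_le_nat mult.right_neutral mult_le_mono2)
  qed
  then show ?thesis using finite_subset by blast
qed

lemma card_filter_sum: "finite A \<Longrightarrow> card {x\<in>A. P x} = (\<Sum>x\<in>A. if P x then 1 else (0::nat))"
  by (simp add: sum.inter_filter[symmetric])

lemma main_count:
  assumes grp: "group R" and fin: "finite (carrier R)"
  shows "subgroup K R \<Longrightarrow> real (card (ov R K m))
     \<le> (\<Sum>k\<in>SS (card K) m. (2 * real (card (carrier R)) / real m) ^ k)"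
proof (induction "card (carrier R) - card K" arbitrary: K rule: less_induct)
  case less
  interpret group R by fact
  let ?c = "2 * real (card (carrier R)) / real m"
  have Ksub: "K \<subseteq> carrier R" using less.prems subgroup.subset by blast
  have Kfin: "finite K" using Ksub fin finite_subset by blast
  have Kpos: "card K \<ge> 1" using subgroup.finite_imp_card_positive[OF less.prems] fin by simp
  have finS: "finite (SS (card K) m)" using SS_finite Kpos by blast
  have nonneg: "0 \<le> ?c" by simp
  have ovsub: "ov R K m \<subseteq> Pow (carrier R)" unfolding ov_def using subgroup.subset by blast
  have finov: "finite (ov R K m)" using ovsub fin finite_subset by blast
  show ?case
  proof (cases "ov R K m = {}")
    case True then show ?thesis by (simp add: sum_nonneg)
  next
    case False
    then obtain H0 where H0: "H0 \<in> ov R K m" by blast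
    have H0s: "subgroup H0 R" "K \<subseteq> H0" "card H0 = m" using H0 by (auto simp: ov_def)
    have H0fin: "finite H0" using H0s(1) subgroup.subset fin finite_subset by blast
    have Km: "card K \<le> m" using H0s H0fin card_mono by metis
    show ?thesis
    proof (cases "m = card K")
      case True
      have "ov R K m \<subseteq> {K}"
      proof
        fix H assume "H \<in> ov R K m"
        hence "subgroup H R" "K \<subseteq> H" "card H = card K" using True by (auto simp: ov_def)
        moreover have "finite H" using calculation(1) subgroup.subset fin finite_subset by blast
        ultimately show "H \<in> {K}" using card_subset_eq by (metis singletonI)
      qed
      hence c1: "card (ov R K m) \<le> 1" using card_mono[of "{K}" "ov R K m"] by simp
      have "0 \<in> SS (card K) m" using True by (simp add: SS_def)
      hence "?c ^ 0 \<le> (\<Sum>k\<in>SS (card K) m. ?c^k)"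
        by (intro member_le_sum finS) auto
      then show ?thesis using c1 by simp
    next
      case False
      hence mgt: "card K < m" using Km by simp
      have dvdm: "card K dvd m" using sub_card_dvd[OF grp less.prems H0s(1,2)] H0s(3) by simp
      have m2: "2 * card K \<le> m"
      proof -
        obtain q where q: "m = card K * q" using dvdm by blast
        have "q \<noteq> 0" "q \<noteq> 1" using q mgt by auto
        hence "q \<ge> 2" by simp
        thus ?thesis using q by (metis mult.commute mult_le_mono2)
      qed
      define G where "G x = generate R (insert x K)" for x
      have Gsub: "subgroup (G x) R" if "x \<in> carrier R" for x
        unfolding G_def by (rule generate_is_subgroup) (use Ksub that in auto)
      have GK: "K \<subseteq> G x" "x \<in> G x" for x
        unfolding G_def by (auto intro: generate.incl)
      have Gfin: "finite (G x)" if "x \<in> carrier R" for x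
        using subgroup.subset[OF Gsub[OF that]] fin by (rule finite_subset)
      have Gcard: "2 * card K \<le> card (G x)" "card K < card (G x)" if "x \<in> carrier R - K" for x
      proof -
        have "K \<subset> G x" using GK that by blast
        hence lt: "card K < card (G x)" using Gfin that psubset_card_mono by blast
        have "card K dvd card (G x)" using sub_card_dvd[OF grp less.prems Gsub GK(1)] that by blast
        then obtain q where q: "card (G x) = card K * q" by blast
        have "q \<noteq> 0" "q \<noteq> 1" using q lt by auto
        hence "q \<ge> 2" by simp
        thus "2 * card K \<le> card (G x)" using q by (metis mult.commute mult_le_mono2)
        show "card K < card (G x)" by fact
      qed
      define S' where "S' = {k. 2^(k+1) * card K \<le> m}"
      have S'sub: "S' \<subseteq> SS (card K) m"
      proof
        fix k assume "k \<in> S'"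
        hence "2^(k+1) * card K \<le> m" by (simp add: S'_def)
        moreover have "2^k * card K \<le> 2^(k+1) * card K" by simp
        ultimately show "k \<in> SS (card K) m" unfolding SS_def by simp
      qed
      have finS': "finite S'" by (rule finite_subset[OF S'sub finS])
      have IH2: "real (card (ov R (G x) m)) \<le> (\<Sum>k\<in>S'. ?c^k)" if x: "x \<in> carrier R - K" for x
      proof -
        have "card (G x) \<le> card (carrier R)" by (rule card_mono[OF fin subgroup.subset[OF Gsub]]) (use x in auto)
        hence "card (carrier R) - card (G x) < card (carrier R) - card K" using Gcard(2)[OF x] by linarith
        hence "real (card (ov R (G x) m)) \<le> (\<Sum>k\<in>SS (card (G x)) m. ?c^k)"
          using less.hyps Gsub x by blast
        also have "\<dots> \<le> (\<Sum>k\<in>S'. ?c^k)"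
        proof (rule sum_mono2[OF finS'])
          show "SS (card (G x)) m \<subseteq> S'"
          proof
            fix k assume "k \<in> SS (card (G x)) m"
            hence "2^k * card (G x) \<le> m" by (simp add: SS_def)
            moreover have "2^k * (2 * card K) \<le> 2^k * card (G x)" using Gcard(1)[OF x] by (rule mult_le_mono2)
            ultimately have "2^k * (2 * card K) \<le> m" by (rule le_trans[rotated])
            moreover have "2^(k+1) * card K = 2^k * (2 * card K)" by simp
            ultimately show "k \<in> S'" unfolding S'_def by simp
          qed
        qed simp
        finally show ?thesis .
      qed
      have fib: "{H \<in> ov R K m. x \<in> H} \<subseteq> ov R (G x) m" if "x \<in> carrier R - K" for x
      proof
        fix H assume "H \<in> {H \<in> ov R K m. x \<in> H}"
        then have h: "subgroup H R" "K \<subseteq> H" "x \<in> H" "card H = m" by (auto simp: ov_def)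
        then have "G x \<subseteq> H" unfolding G_def by (intro generate_subgroup_incl) auto
        with h show "H \<in> ov R (G x) m" by (simp add: ov_def)
      qed
      have finfib: "finite (ov R (G x) m)" if "x \<in> carrier R" for x
        using fin finite_subset[of "ov R (G x) m" "Pow (carrier R)"] unfolding ov_def using subgroup.subset by blast
      have finC: "finite (carrier R - K)" using fin by simp
      have dc: "(\<Sum>H\<in>ov R K m. card (H - K)) = (\<Sum>x\<in>carrier R - K. card {H\<in>ov R K m. x \<in> H})"
      proof -
        have "(\<Sum>H\<in>ov R K m. card (H - K)) = (\<Sum>H\<in>ov R K m. \<Sum>x\<in>carrier R - K. if x \<in> H then 1 else (0::nat))"
        proof (rule sum.cong[OF refl])
          fix H assume "H \<in> ov R K m"
          hence "H \<subseteq> carrier R" using ovsub by blast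
          hence "H - K = {x \<in> carrier R - K. x \<in> H}" by blast
          thus "card (H - K) = (\<Sum>x\<in>carrier R - K. if x \<in> H then 1 else (0::nat))"
            using card_filter_sum[OF finC] by simp
        qed
        also have "\<dots> = (\<Sum>x\<in>carrier R - K. \<Sum>H\<in>ov R K m. if x \<in> H then 1 else (0::nat))"
          by (rule sum.swap)
        also have "\<dots> = (\<Sum>x\<in>carrier R - K. card {H\<in>ov R K m. x \<in> H})"
          using card_filter_sum[OF finov] by simp
        finally show ?thesis .
      qed
      have "(\<Sum>H\<in>ov R K m. card (H - K)) = card (ov R K m) * (m - card K)"
      proof -
        have "(\<Sum>H\<in>ov R K m. card (H - K)) = (\<Sum>H\<in>ov R K m. m - card K)"
          by (rule sum.cong[OF refl]) (auto simp: ov_def card_Diff_subset Kfin)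
        thus ?thesis by simp
      qed
      hence "real (card (ov R K m)) * (real m - real (card K))
          = real (\<Sum>x\<in>carrier R - K. card {H\<in>ov R K m. x \<in> H})"
        using dc mgt by (simp add: of_nat_diff)
      also have "\<dots> \<le> (\<Sum>x\<in>carrier R - K. real (card (ov R (G x) m)))"
        unfolding of_nat_sum
        by (intro sum_mono of_nat_mono card_mono finfib fib) auto
      also have "\<dots> \<le> (\<Sum>x\<in>carrier R - K. (\<Sum>k\<in>S'. ?c^k))"
        by (intro sum_mono IH2)
      also have "\<dots> = real (card (carrier R - K)) * (\<Sum>k\<in>S'. ?c^k)" by simp
      also have "\<dots> \<le> real (card (carrier R)) * (\<Sum>k\<in>S'. ?c^k)"
        by (intro mult_right_mono sum_nonneg) (auto intro: card_mono fin)
      finally have A: "real (card (ov R K m)) * (real m - real (card K)) \<le> real (card (carrier R)) * (\<Sum>k\<in>S'. ?c^k)" .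
      have mpos: "real m > 0" using mgt by simp
      have "real (card (ov R K m)) * (real m / 2) \<le> real (card (ov R K m)) * (real m - real (card K))"
        using m2 by (intro mult_left_mono) auto
      with A have B: "real (card (ov R K m)) * real m \<le> 2 * real (card (carrier R)) * (\<Sum>k\<in>S'. ?c^k)" by simp
      have "real (card (ov R K m)) \<le> ?c * (\<Sum>k\<in>S'. ?c^k)"
        using B mpos by (simp add: field_simps)
      also have "\<dots> = (\<Sum>k\<in>S'. ?c^(Suc k))" by (simp add: sum_distrib_left)
      also have "\<dots> = (\<Sum>k\<in>Suc ` S'. ?c^k)" by (simp add: sum.reindex)
      also have "\<dots> \<le> (\<Sum>k\<in>SS (card K) m. ?c^k)"
        by (rule sum_mono2[OF finS]) (auto simp: S'_def SS_def)
      finally show ?thesis .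
    qed
  qed
qed

lemma final_ineq:
  fixes n :: real assumes n1: "n \<ge> 1"
  shows "n * (log 2 n + 1) * 2 powr ((log 2 n + 1)^2/4) \<le> 7.3722 * n powr (log 2 n / 4 + 1.8919)"
proof -
  define b where "b = log 2 n"
  have b0: "b \<ge> 0" unfolding b_def using n1 by simp
  have nb: "n = 2 powr b" unfolding b_def using n1 by simp
  have q: "(2::real) powr (1/4) \<le> 1.2"
  proof (rule ccontr)
    assume "\<not> ?thesis"
    hence "1.2 < (2::real) powr (1/4)" by simp
    hence "(1.2::real)^4 < (2 powr (1/4))^4" by (intro power_strict_mono) auto
    also have "(2 powr (1/4))^4 = (2::real) powr (1/4 * 4)" by (simp add: powr_realpow[symmetric] powr_powr del: powr_realpow)
    finally show False by (simp add: power_numeral_reduce)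
  qed
  have e: "(2::real) powr (0.3919 * b) \<ge> 1 + 0.3919 * (2/3) * b"
  proof -
    have "(2::real) powr (0.3919 * b) = exp (0.3919 * b * ln 2)" by (simp add: powr_def)
    also have "\<dots> \<ge> 1 + 0.3919 * b * ln 2" by (rule exp_ge_add_one_self)
    finally have "(2::real) powr (0.3919 * b) \<ge> 1 + 0.3919 * b * ln 2" .
    moreover have "0.3919 * b * (2/3) \<le> 0.3919 * b * ln 2"
      using ln2_ge_two_thirds b0 by (intro mult_left_mono) auto
    ultimately show ?thesis by simp
  qed
  have key: "(b+1) * 2 powr (1/4) \<le> 7.3722 * 2 powr (0.3919 * b)"
  proof -
    have "(b+1) * 2 powr (1/4) \<le> (b+1) * 1.2" using q b0 by (intro mult_left_mono) auto
    also have "\<dots> \<le> 7.3722 * (1 + 0.3919 * (2/3) * b)" using b0 by simp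
    also have "\<dots> \<le> 7.3722 * 2 powr (0.3919 * b)" using e by simp
    finally show ?thesis .
  qed
  have lhs: "n * (b + 1) * 2 powr ((b + 1)^2/4) = ((b+1) * 2 powr (1/4)) * 2 powr (b * (b/4 + 1.8919) - 0.3919 * b)"
  proof -
    have "n * (b + 1) * 2 powr ((b + 1)^2/4) = (b+1) * 2 powr (b + (b + 1)^2/4)"
      by (simp add: nb powr_add)
    also have "b + (b + 1)^2/4 = 1/4 + (b * (b/4 + 1.8919) - 0.3919 * b)"
      by (simp add: power2_eq_square field_simps)
    also have "(b+1) * 2 powr (1/4 + (b * (b/4 + 1.8919) - 0.3919 * b)) = ((b+1) * 2 powr (1/4)) * 2 powr (b * (b/4 + 1.8919) - 0.3919 * b)"
      by (simp add: powr_add)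
    finally show ?thesis .
  qed
  have rhs: "7.3722 * n powr (b / 4 + 1.8919) = (7.3722 * 2 powr (0.3919 * b)) * 2 powr (b * (b/4 + 1.8919) - 0.3919 * b)"
  proof -
    have "n powr (b / 4 + 1.8919) = 2 powr (b * (b/4 + 1.8919))" by (simp add: nb powr_powr)
    also have "b * (b/4 + 1.8919) = 0.3919 * b + (b * (b/4 + 1.8919) - 0.3919 * b)" by simp
    also have "(2::real) powr \<dots> = 2 powr (0.3919 * b) * 2 powr (b * (b/4 + 1.8919) - 0.3919 * b)" by (rule powr_add)
    finally show ?thesis by simp
  qed
  show ?thesis unfolding b_def[symmetric] lhs rhs
    using key by (intro mult_right_mono) auto
qed

lemma term_bound:
  fixes n j :: nat and k :: nat
  assumes "2^k \<le> j" "n \<ge> 1"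
  shows "(2 * real n / real j) ^ k \<le> 2 powr ((log 2 n + 1)^2/4)"
proof -
  define b where "b = log 2 n"
  have nb: "real n = 2 powr b" unfolding b_def using assms by simp
  have jpos: "real j > 0" using assms(1) by (metis gr0I le_zero_eq of_nat_0_less_iff pos2 zero_less_power)
  have "(2 * real n / real j) ^ k \<le> (2 * real n / 2^k) ^ k"
  proof (rule power_mono)
    have "(2::real)^k \<le> real j" using assms(1) by (metis of_nat_le_iff of_nat_numeral of_nat_power)
    thus "2 * real n / real j \<le> 2 * real n / 2^k" using jpos by (intro divide_left_mono) auto
  qed simp
  also have "2 * real n / 2^k = 2 powr (1 + b - real k)"
    by (simp add: nb powr_diff powr_add powr_realpow)
  also have "(2 powr (1 + b - real k)) ^ k = 2 powr ((1 + b - real k) * real k)"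
    by (simp add: powr_powr[symmetric] powr_realpow[symmetric] del: powr_realpow)
  also have "\<dots> \<le> 2 powr ((b + 1)^2/4)"
  proof (rule powr_mono)
    have "0 \<le> (b + 1 - 2 * real k)^2" by simp
    thus "(1 + b - real k) * real k \<le> (b + 1)^2/4" by (simp add: power2_eq_square algebra_simps)
  qed simp
  finally show ?thesis unfolding b_def .
qed

theorem theorem1p1:
  fixes R :: "('a, 'b) monoid_scheme" and T :: "'a set"
  assumes "group R" and "finite (carrier R)" and "subgroup T R"
  shows "real (card (Sub R T))
    \<le> 7.3722 * real (card (rcosets\<^bsub>R\<^esub> T))
          powr (log 2 (real (card (rcosets\<^bsub>R\<^esub> T))) / 4 + 1.8919)"
proof -
  interpret group R by fact
  define n where "n = card (rcosets\<^bsub>R\<^esub> T)"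
  define t where "t = card T"
  have lag: "n * t = card (carrier R)" using lagrange[OF assms(3)] unfolding n_def t_def by (simp add: Coset.order_def)
  have t1: "t \<ge> 1" using subgroup.finite_imp_card_positive[OF assms(3) assms(2)] unfolding t_def by simp
  have cpos: "card (carrier R) \<ge> 1" proof -
    have "carrier R \<noteq> {}" using one_closed by blast
    hence "card (carrier R) > 0" using assms(2) by (simp add: card_gt_0_iff)
    thus ?thesis by simp
  qed
  have n1: "n \<ge> 1" using lag cpos by (cases n) auto
  have subU: "Sub R T \<subseteq> (\<Union>j\<in>{1..n}. ov R T (t*j))"
  proof
    fix H assume "H \<in> Sub R T"
    hence H: "subgroup H R" "T \<subseteq> H" by (auto simp: Sub_def)
    have "t dvd card H" unfolding t_def by (rule sub_card_dvd[OF assms(1,3) H(1,2)])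
    then obtain j where j: "card H = t * j" by blast
    have "card H \<ge> 1" using subgroup.finite_imp_card_positive[OF H(1) assms(2)] by simp
    hence "j \<ge> 1" using j by (cases j) auto
    moreover have "card H \<le> card (carrier R)" by (rule card_mono[OF assms(2) subgroup.subset[OF H(1)]])
    hence "t * j \<le> t * n" using j lag by (simp add: mult.commute)
    hence "j \<le> n" using t1 by simp
    ultimately show "H \<in> (\<Union>j\<in>{1..n}. ov R T (t*j))" using H j by (auto simp: ov_def)
  qed
  define B where "B = (2::real) powr ((log 2 n + 1)^2/4)"
  have finU: "finite (\<Union>j\<in>{1..n}. ov R T (t*j))"
    by (rule finite_subset[of _ "Pow (carrier R)"]) (use assms(2) subgroup.subset in \<open>auto simp: ov_def\<close>)
  have "card (Sub R T) \<le> card (\<Union>j\<in>{1..n}. ov R T (t*j))" by (rule card_mono[OF finU subU])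
  also have "\<dots> \<le> (\<Sum>j\<in>{1..n}. card (ov R T (t*j)))" by (rule card_UN_le) simp
  finally have "real (card (Sub R T)) \<le> (\<Sum>j\<in>{1..n}. real (card (ov R T (t*j))))"
    by (metis of_nat_le_iff of_nat_sum)
  also have "\<dots> \<le> (\<Sum>j\<in>{1..n}. (log 2 n + 1) * B)"
  proof (rule sum_mono)
    fix j assume j: "j \<in> {1..n}"
    have "real (card (ov R T (t*j))) \<le> (\<Sum>k\<in>SS t (t*j). (2 * real (card (carrier R)) / real (t*j)) ^ k)"
      using main_count[OF assms(1,2) assms(3)] unfolding t_def by blast
    also have "\<dots> = (\<Sum>k\<in>SS t (t*j). (2 * real n / real j) ^ k)"
      using t1 by (simp add: lag[symmetric])
    also have "\<dots> \<le> real (card (SS t (t*j))) * B"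
    proof (rule sum_bounded_above)
      fix k assume "k \<in> SS t (t*j)"
      hence "2^k * t \<le> t * j" by (simp add: SS_def)
      hence "2^k \<le> j" using t1 by (simp add: mult.commute)
      thus "(2 * real n / real j) ^ k \<le> B" unfolding B_def using term_bound n1 by blast
    qed
    also have "\<dots> \<le> (log 2 n + 1) * B"
    proof (rule mult_right_mono)
      have "SS t (t*j) \<subseteq> {..nat \<lfloor>log 2 n\<rfloor>}"
      proof
        fix k assume "k \<in> SS t (t*j)"
        hence "2^k * t \<le> t * j" by (simp add: SS_def)
        hence "2^k \<le> j" using t1 by (simp add: mult.commute)
        hence "2^k \<le> n" using j by simp
        hence "(2::real)^k \<le> real n" by (metis of_nat_le_iff of_nat_numeral of_nat_power)
        hence "real k \<le> log 2 n" by (intro le_log_of_power) auto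
        hence "int k \<le> \<lfloor>log 2 n\<rfloor>" by linarith
        thus "k \<in> {..nat \<lfloor>log 2 n\<rfloor>}" by simp
      qed
      hence "card (SS t (t*j)) \<le> nat \<lfloor>log 2 n\<rfloor> + 1" using card_mono[of "{..nat \<lfloor>log 2 n\<rfloor>}"] by fastforce
      moreover have "log 2 n \<ge> 0" using n1 by simp
      ultimately show "real (card (SS t (t*j))) \<le> log 2 n + 1" by linarith
      show "0 \<le> B" unfolding B_def by simp
    qed
    finally show "real (card (ov R T (t*j))) \<le> (log 2 n + 1) * B" .
  qed
  also have "\<dots> = real n * (log 2 n + 1) * B" by simp
  also have "\<dots> \<le> 7.3722 * real n powr (log 2 n / 4 + 1.8919)"
    unfolding B_def using final_ineq n1 by simp
  finally show ?thesis unfolding n_def .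
qed

end
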